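(* For every $d\ge1$, $\theta_{d+1}^*\le\theta_d^*$.
   Context: For $d\ge1$, call a probability density $f$ on $\mathbb R^d$ admissible if it is smooth, strictly positive, rapidly decaying, and $\mathcal Q[f]>0$. Define $\theta_d^*=\inf_f \mathcal I[f]\mathcal D[f]/\mathcal Q[f]^2$, the infimum over admissible densities on $\mathbb R^d$ (possibly $-\infty$). Here, writing $f=e^u$ and $\mathsf H_f=-\nabla^2u$: $\mathcal I[f]=\int\operatorname{tr}(\mathsf H_f)f\,dx$, $\mathcal Q[f]=\int\operatorname{tr}(\mathsf H_f^2)f\,dx$, $\mathcal D[f]=\int(|\nabla\mathsf H_f|^2+2\operatorname{tr}(\mathsf H_f^3))f\,dx$, with $|\nabla\mathsf H_f|^2=\sum_{i,j,k}(\partial_k(\mathsf H_f)_{ij})^2$. *)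

theory Defs
  imports "HOL-Analysis.Analysis"
begin

text \<open>Euclidean space R^d is modelled as real^'n with d = CARD('n).
  Partial derivative in coordinate i (directional derivative along the unit vector axis i 1).\<close>

definition pd :: "'n::finite \<Rightarrow> (real^'n \<Rightarrow> real) \<Rightarrow> real^'n \<Rightarrow> real" where
  "pd i g x = deriv (\<lambda>t. g (x + t *\<^sub>R axis i 1)) 0"

fun iter_pd :: "'n::finite list \<Rightarrow> (real^'n \<Rightarrow> real) \<Rightarrow> real^'n \<Rightarrow> real" where
  "iter_pd [] g = g"
| "iter_pd (i # is) g = pd i (iter_pd is g)"

definition smooth_fun :: "(real^'n::finite \<Rightarrow> real) \<Rightarrow> bool" where
  "smooth_fun g \<longleftrightarrow> (\<forall>is. \<forall>x. iter_pd is g differentiable (at x))"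

definition rapidly_decaying :: "(real^'n::finite \<Rightarrow> real) \<Rightarrow> bool" where
  "rapidly_decaying g \<longleftrightarrow> (\<forall>is (k::nat). bounded (range (\<lambda>x. norm x ^ k * iter_pd is g x)))"

definition Hf :: "(real^'n::finite \<Rightarrow> real) \<Rightarrow> 'n \<Rightarrow> 'n \<Rightarrow> real^'n \<Rightarrow> real" where
  "Hf f i j x = - pd i (pd j (\<lambda>y. ln (f y))) x"

definition tr_H :: "(real^'n::finite \<Rightarrow> real) \<Rightarrow> real^'n \<Rightarrow> real" where
  "tr_H f x = (\<Sum>i\<in>UNIV. Hf f i i x)"

definition tr_H2 :: "(real^'n::finite \<Rightarrow> real) \<Rightarrow> real^'n \<Rightarrow> real" where
  "tr_H2 f x = (\<Sum>i\<in>UNIV. \<Sum>j\<in>UNIV. Hf f i j x * Hf f j i x)"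

definition tr_H3 :: "(real^'n::finite \<Rightarrow> real) \<Rightarrow> real^'n \<Rightarrow> real" where
  "tr_H3 f x = (\<Sum>i\<in>UNIV. \<Sum>j\<in>UNIV. \<Sum>k\<in>UNIV. Hf f i j x * Hf f j k x * Hf f k i x)"

definition gradH_sq :: "(real^'n::finite \<Rightarrow> real) \<Rightarrow> real^'n \<Rightarrow> real" where
  "gradH_sq f x = (\<Sum>i\<in>UNIV. \<Sum>j\<in>UNIV. \<Sum>k\<in>UNIV. (pd k (Hf f i j) x)\<^sup>2)"

definition I_fun :: "(real^'n::finite \<Rightarrow> real) \<Rightarrow> real" where
  "I_fun f = integral\<^sup>L lborel (\<lambda>x. tr_H f x * f x)"

definition Q_fun :: "(real^'n::finite \<Rightarrow> real) \<Rightarrow> real" where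
  "Q_fun f = integral\<^sup>L lborel (\<lambda>x. tr_H2 f x * f x)"

definition D_fun :: "(real^'n::finite \<Rightarrow> real) \<Rightarrow> real" where
  "D_fun f = integral\<^sup>L lborel (\<lambda>x. (gradH_sq f x + 2 * tr_H3 f x) * f x)"

definition admissible :: "(real^'n::finite \<Rightarrow> real) \<Rightarrow> bool" where
  "admissible f \<longleftrightarrow> smooth_fun f \<and> (\<forall>x. f x > 0) \<and> rapidly_decaying f
     \<and> integrable lborel f \<and> integral\<^sup>L lborel f = 1
     \<and> integrable lborel (\<lambda>x. tr_H f x * f x)
     \<and> integrable lborel (\<lambda>x. tr_H2 f x * f x)
     \<and> integrable lborel (\<lambda>x. (gradH_sq f x + 2 * tr_H3 f x) * f x)
     \<and> Q_fun f > 0"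

text \<open>theta^*_d for d = CARD('n), as an extended real (possibly -infinity).\<close>
definition theta_star :: "'n::finite itself \<Rightarrow> ereal" where
  "theta_star _ = (INF f \<in> {f :: real^'n \<Rightarrow> real. admissible f}.
                     ereal (I_fun f * D_fun f / (Q_fun f)\<^sup>2))"

end

theory Submission imports Defs "HOL-Probability.Probability" "HOL-Computational_Algebra.Polynomial"
begin

locale splitc =
  fixes e :: "'m::finite \<Rightarrow> 'n::finite option"
  assumes bij: "bij e"
begin

definition r :: "'n option \<Rightarrow> 'm" where "r = inv e"
definition proj :: "real^'m \<Rightarrow> real^'n" where "proj x = (\<chi> k. x $ r (Some k))"
definition lst :: "real^'m \<Rightarrow> real" where "lst x = x $ r None"

lemma e_r[simp]: "e (r z) = z"
  unfolding r_def using bij by (simp add: bij_is_surj surj_f_inv_f)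
lemma r_e[simp]: "r (e i) = i"
  unfolding r_def using bij by (simp add: bij_is_inj)
lemma r_eq_iff: "r z = i \<longleftrightarrow> e i = z"
  by (metis e_r r_e)

lemma proj_add_axis: "proj (x + t *\<^sub>R axis i 1) = proj x + t *\<^sub>R (case e i of Some k \<Rightarrow> axis k 1 | None \<Rightarrow> 0)"
  by (cases "e i") (auto simp: vec_eq_iff proj_def axis_def r_eq_iff)

lemma lst_add_axis: "lst (x + t *\<^sub>R axis i 1) = lst x + (case e i of Some k \<Rightarrow> 0 | None \<Rightarrow> t)"
  by (cases "e i") (auto simp: lst_def axis_def r_eq_iff)

lemma pd_split: "pd i (\<lambda>x. \<Phi> (proj x) (lst x)) x = (case e i of
     Some k \<Rightarrow> deriv (\<lambda>t. \<Phi> (proj x + t *\<^sub>R axis k 1) (lst x)) 0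
   | None \<Rightarrow> deriv (\<lambda>t. \<Phi> (proj x) (lst x + t)) 0)"
  by (cases "e i") (simp_all add: pd_def proj_add_axis lst_add_axis)

lemma sum_m: "(\<Sum>i\<in>UNIV. \<phi> (e i)) = \<phi> None + (\<Sum>k\<in>UNIV. \<phi> (Some k))"
proof -
  have "(\<Sum>i\<in>UNIV. \<phi> (e i)) = (\<Sum>z\<in>UNIV. \<phi> z)"
    using sum.reindex_bij_betw[of e UNIV UNIV \<phi>] bij by (simp add: bij_betw_def bij_def)
  also have "\<dots> = \<phi> None + (\<Sum>k\<in>UNIV. \<phi> (Some k))"
    by (subst UNIV_option_conv) (simp add: sum.reindex)
  finally show ?thesis .
qed

lemma sum_m': "(\<Sum>i\<in>UNIV. \<psi> i) = \<psi> (r None) + (\<Sum>k\<in>UNIV. \<psi> (r (Some k)))"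
  using sum_m[of "\<lambda>z. \<psi> (r z)"] by simp


lemma deriv_add_const: "deriv (\<lambda>t. h t + c) x = deriv h x"
proof -
  have "((\<lambda>t. h t + c) has_field_derivative D) (at x) \<longleftrightarrow> (h has_field_derivative D) (at x)" for D
  proof
    assume "((\<lambda>t. h t + c) has_field_derivative D) (at x)"
    from DERIV_add[OF this DERIV_const[of "-c"]] show "(h has_field_derivative D) (at x)" by simp
  next
    assume "(h has_field_derivative D) (at x)"
    from DERIV_add[OF this DERIV_const[of "c"]] show "((\<lambda>t. h t + c) has_field_derivative D) (at x)" by simp
  qed
  then show ?thesis unfolding deriv_def by simp
qed

lemma deriv_const_add: "deriv (\<lambda>t. c + h t) x = deriv h x"
  using deriv_add_const[of h c x] by (simp add: add.commute)

end

definition HH :: "(real^'n::finite \<Rightarrow> real) \<Rightarrow> real \<Rightarrow> 'n option \<Rightarrow> 'n option \<Rightarrow> real^'n \<Rightarrow> real" where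
  "HH f a p q = (case p of Some l \<Rightarrow> (case q of Some k \<Rightarrow> Hf f l k | None \<Rightarrow> (\<lambda>_. 0))
                         | None \<Rightarrow> (case q of Some k \<Rightarrow> (\<lambda>_. 0) | None \<Rightarrow> (\<lambda>_. a)))"

locale splitg = splitc e for e :: "'m::finite \<Rightarrow> 'n::finite option" +
  fixes f :: "real^'n \<Rightarrow> real" and s :: real
  assumes fpos: "\<And>x. f x > 0" and spos: "s > 0"
begin

definition F :: "real^'m \<Rightarrow> real" where "F x = f (proj x) * normal_density 0 s (lst x)"

definition q :: "real \<Rightarrow> real" where "q y = ln (1 / sqrt (2 * pi * s\<^sup>2)) - y\<^sup>2 / (2 * s\<^sup>2)"

lemma ln_nd: "ln (normal_density 0 s y) = q y"
  using spos by (simp add: normal_density_def q_def ln_div)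

lemma lnF: "(\<lambda>y. ln (F y)) = (\<lambda>y. ln (f (proj y)) + q (lst y))"
proof
  fix y
  have "f (proj y) > 0" "normal_density 0 s (lst y) > 0" using fpos spos normal_density_pos by auto
  then show "ln (F y) = ln (f (proj y)) + q (lst y)" by (simp add: F_def ln_mult ln_nd)
qed

lemma deriv_q: "deriv (\<lambda>t. q (y + t)) 0 = - y / s\<^sup>2"
proof -
  have "((\<lambda>t. q (y + t)) has_field_derivative (- y / s\<^sup>2)) (at 0)"
    unfolding q_def using spos
    by (auto intro!: derivative_eq_intros simp: field_simps power2_eq_square)
  then show ?thesis by (rule DERIV_imp_deriv)
qed

lemma deriv_lin: "deriv (\<lambda>t. (- y - t) / s\<^sup>2) 0 = - 1 / s\<^sup>2"
proof -
  have "((\<lambda>t. (- y - t) / s\<^sup>2) has_field_derivative (- 1 / s\<^sup>2)) (at 0)"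
    using spos by (auto intro!: derivative_eq_intros simp: field_simps)
  then show ?thesis by (rule DERIV_imp_deriv)
qed

definition P :: "'m \<Rightarrow> real^'n \<Rightarrow> real \<Rightarrow> real" where
  "P j u y = (case e j of Some k \<Rightarrow> pd k (\<lambda>y. ln (f y)) u | None \<Rightarrow> - y / s\<^sup>2)"

lemma pd_lnF: "pd j (\<lambda>y. ln (F y)) = (\<lambda>y. P j (proj y) (lst y))"
proof
  fix x
  show "pd j (\<lambda>y. ln (F y)) x = P j (proj x) (lst x)"
    unfolding lnF pd_split[where \<Phi>="\<lambda>u y. ln (f u) + q y"]
    by (cases "e j") (simp_all add: P_def deriv_add_const deriv_const_add deriv_q pd_def)
qed

lemma Hf_F: "Hf F i j = (\<lambda>x. HH f (1 / s\<^sup>2) (e i) (e j) (proj x))"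
proof
  fix x
  show "Hf F i j x = HH f (1 / s\<^sup>2) (e i) (e j) (proj x)"
    unfolding Hf_def pd_lnF pd_split[where \<Phi>="P j"]
    by (cases "e i"; cases "e j") (simp_all add: P_def HH_def Hf_def pd_def deriv_lin)
qed

lemma trH_F: "tr_H F x = 1 / s\<^sup>2 + tr_H f (proj x)"
  unfolding tr_H_def Hf_F by (simp add: sum_m' HH_def)

lemma trH2_F: "tr_H2 F x = (1 / s\<^sup>2)\<^sup>2 + tr_H2 f (proj x)"
  unfolding tr_H2_def Hf_F by (simp add: sum_m' HH_def power2_eq_square)

lemma trH3_F: "tr_H3 F x = (1 / s\<^sup>2)^3 + tr_H3 f (proj x)"
  unfolding tr_H3_def Hf_F by (simp add: sum_m' HH_def power3_eq_cube)

lemma pd_HH: "pd k (\<lambda>x. HH f a p p' (proj x)) x =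
   (case e k of None \<Rightarrow> 0 | Some m \<Rightarrow> (case p of Some l \<Rightarrow> (case p' of Some l' \<Rightarrow> pd m (Hf f l l') (proj x) | None \<Rightarrow> 0) | None \<Rightarrow> 0))"
  unfolding pd_split[where \<Phi>="\<lambda>u y. HH f a p p' u"]
  by (cases "e k"; cases p; cases p') (simp_all add: HH_def pd_def)

lemma gradH_F: "gradH_sq F x = gradH_sq f (proj x)"
  unfolding gradH_sq_def Hf_F pd_HH by (simp add: sum_m')

end

primrec PP :: "real \<Rightarrow> nat \<Rightarrow> real poly" where
  "PP s 0 = [:1 / sqrt (2 * pi * s\<^sup>2):]"
| "PP s (Suc k) = pderiv (PP s k) - [:0, 1 / s\<^sup>2:] * PP s k"

definition GG :: "real \<Rightarrow> nat \<Rightarrow> real \<Rightarrow> real" where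
  "GG s k y = poly (PP s k) y * exp (- (y\<^sup>2) / (2 * s\<^sup>2))"

lemma GG0: "GG s 0 = normal_density 0 s"
  by (auto simp: GG_def normal_density_def fun_eq_iff)

lemma GG_deriv: assumes "s > 0" shows "(GG s k has_field_derivative GG s (Suc k) y) (at y)"
proof -
  let ?E = "exp (- (y\<^sup>2) / (2 * s\<^sup>2))"
  have d1: "((\<lambda>y. - (y\<^sup>2) / (2 * s\<^sup>2)) has_field_derivative (- y / s\<^sup>2)) (at y)"
  proof -
    have "((\<lambda>y. - (y\<^sup>2) / (2 * s\<^sup>2)) has_field_derivative (- (2 * y) / (2 * s\<^sup>2))) (at y)"
      using assms by (auto intro!: derivative_eq_intros) (simp add: power2_eq_square power4_eq_xxxx)
    then show ?thesis using assms by simp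
  qed
  have d2: "((\<lambda>y. exp (- (y\<^sup>2) / (2 * s\<^sup>2))) has_field_derivative ?E * (- y / s\<^sup>2)) (at y)"
    using DERIV_chain2[OF DERIV_exp d1] by simp
  have "((\<lambda>y. poly (PP s k) y * exp (- (y\<^sup>2) / (2 * s\<^sup>2))) has_field_derivative
      poly (pderiv (PP s k)) y * ?E + ?E * (- y / s\<^sup>2) * poly (PP s k) y) (at y)"
    using DERIV_mult[OF poly_DERIV d2] by (simp add: mult.commute)
  moreover have "poly (pderiv (PP s k)) y * ?E + ?E * (- y / s\<^sup>2) * poly (PP s k) y = GG s (Suc k) y"
    by (simp add: GG_def algebra_simps)
  ultimately show ?thesis unfolding GG_def[abs_def] by simp
qed

lemma exp_ge_pow: "(z::real) \<ge> 0 \<Longrightarrow> z ^ n / fact n \<le> exp z"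
proof -
  assume z: "z \<ge> 0"
  have s: "summable (\<lambda>n. z ^ n /\<^sub>R fact n)" using exp_converges sums_summable by blast
  have "sum (\<lambda>n. z ^ n /\<^sub>R fact n) {n} \<le> suminf (\<lambda>n. z ^ n /\<^sub>R fact n)"
    by (rule sum_le_suminf[OF s]) (use z in auto)
  moreover have "suminf (\<lambda>n. z ^ n /\<^sub>R fact n) = exp z" using exp_converges[of z] sums_unique by metis
  ultimately show ?thesis by (simp add: divide_inverse mult.commute)
qed

lemma gauss_pow_bound:
  assumes "s > 0"
  shows "\<exists>C. \<forall>y::real. \<bar>y\<bar> ^ n * exp (- (y\<^sup>2) / (2 * s\<^sup>2)) \<le> C"
proof (intro exI allI)
  fix y :: real
  define w where "w = y\<^sup>2 / (2 * s\<^sup>2)"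
  have w0: "w \<ge> 0" unfolding w_def using assms by simp
  have E: "exp (- (y\<^sup>2) / (2 * s\<^sup>2)) = exp (- w)" unfolding w_def by simp
  have "w ^ n / fact n \<le> exp w" using exp_ge_pow[OF w0] .
  then have "w ^ n * exp (- w) \<le> fact n"
    by (simp add: exp_minus field_simps)
  moreover have "(y\<^sup>2) ^ n = (2 * s\<^sup>2) ^ n * w ^ n"
    unfolding w_def using assms by (simp add: power_divide)
  ultimately have A: "(y\<^sup>2) ^ n * exp (- w) \<le> (2 * s\<^sup>2) ^ n * fact n"
    using assms by (simp add: mult.assoc mult_left_mono)
  have "\<bar>y\<bar> ^ n \<le> 1 + (y\<^sup>2) ^ n"
  proof (cases "\<bar>y\<bar> \<le> 1")
    case True
    then have "\<bar>y\<bar> ^ n \<le> 1" by (simp add: power_le_one)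
    moreover have "(y\<^sup>2) ^ n \<ge> 0" by simp
    ultimately show ?thesis by linarith
  next
    case False
    then have "\<bar>y\<bar> ^ n \<le> (\<bar>y\<bar> ^ n) ^ 2"
    proof -
      have "1 \<le> \<bar>y\<bar> ^ n" using False by (simp add: one_le_power)
      then have "\<bar>y\<bar> ^ n * 1 \<le> \<bar>y\<bar> ^ n * \<bar>y\<bar> ^ n" by (intro mult_left_mono) auto
      then show ?thesis by (simp add: power2_eq_square)
    qed
    also have "\<dots> = (y\<^sup>2) ^ n" by (simp add: power_mult[symmetric] mult.commute power_even_abs)
    finally show ?thesis by simp
  qed
  then have "\<bar>y\<bar> ^ n * exp (- w) \<le> (1 + (y\<^sup>2) ^ n) * exp (- w)" by (simp add: mult_right_mono)
  also have "\<dots> = exp (- w) + (y\<^sup>2) ^ n * exp (- w)" by (simp add: algebra_simps)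
  also have "\<dots> \<le> 1 + (2 * s\<^sup>2) ^ n * fact n"
  proof -
    have "exp (- w) \<le> 1" using w0 by simp
    then show ?thesis using A by linarith
  qed
  finally show "\<bar>y\<bar> ^ n * exp (- (y\<^sup>2) / (2 * s\<^sup>2)) \<le> 1 + (2 * s\<^sup>2) ^ n * fact n" using E by simp
qed

lemma GG_bound:
  assumes "s > 0"
  shows "\<exists>C. \<forall>y. \<bar>y\<bar> ^ j * \<bar>GG s k y\<bar> \<le> C"
proof -
  from gauss_pow_bound[OF assms] obtain Cf where Cf: "\<And>n y. \<bar>y\<bar> ^ n * exp (- (y\<^sup>2) / (2 * s\<^sup>2)) \<le> Cf n"
    by metis
  define p where "p = PP s k"
  show ?thesis
  proof (intro exI allI)
    fix y :: real
    let ?E = "exp (- (y\<^sup>2) / (2 * s\<^sup>2))"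
    have "\<bar>y\<bar> ^ j * \<bar>GG s k y\<bar> = \<bar>\<Sum>i\<le>degree p. coeff p i * y ^ i\<bar> * (\<bar>y\<bar> ^ j * ?E)"
      by (simp add: GG_def p_def poly_altdef abs_mult)
    also have "\<dots> \<le> (\<Sum>i\<le>degree p. \<bar>coeff p i\<bar> * \<bar>y\<bar> ^ i) * (\<bar>y\<bar> ^ j * ?E)"
      by (intro mult_right_mono order.trans[OF sum_abs]) (auto simp: abs_mult power_abs)
    also have "\<dots> = (\<Sum>i\<le>degree p. \<bar>coeff p i\<bar> * (\<bar>y\<bar> ^ (i + j) * ?E))"
      unfolding sum_distrib_right by (intro sum.cong refl) (simp add: power_add mult_ac)
    also have "\<dots> \<le> (\<Sum>i\<le>degree p. \<bar>coeff p i\<bar> * Cf (i + j))"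
      by (intro sum_mono mult_left_mono Cf) auto
    finally show "\<bar>y\<bar> ^ j * \<bar>GG s k y\<bar> \<le> (\<Sum>i\<le>degree p. \<bar>coeff p i\<bar> * Cf (i + j))" .
  qed
qed


lemma dir_deriv:
  fixes A :: "'a::real_normed_vector \<Rightarrow> real"
  assumes "A differentiable (at u)"
  shows "((\<lambda>t. A (u + t *\<^sub>R v)) has_field_derivative deriv (\<lambda>t. A (u + t *\<^sub>R v)) 0) (at 0)"
proof -
  have "(\<lambda>t::real. u + t *\<^sub>R v) differentiable (at 0)"
    by (auto intro!: derivative_intros)
  then have "(\<lambda>t. A (u + t *\<^sub>R v)) differentiable (at 0)"
    using differentiable_compose[of A "\<lambda>t. u + t *\<^sub>R v" 0 UNIV] assms by simp
  then show ?thesis using DERIV_deriv_iff_real_differentiable by blast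
qed

context splitg
begin

definition fl :: "'m list \<Rightarrow> 'n list" where
  "fl is = concat (map (\<lambda>i. case e i of Some k \<Rightarrow> [k] | None \<Rightarrow> []) is)"
definition cnt :: "'m list \<Rightarrow> nat" where
  "cnt is = length (filter (\<lambda>i. e i = None) is)"

lemma bl_proj: "bounded_linear proj"
proof -
  have "linear proj" by (rule linearI) (auto simp: proj_def vec_eq_iff)
  then show ?thesis by (simp add: linear_conv_bounded_linear)
qed

lemma bl_lst: "bounded_linear lst"
  unfolding lst_def[abs_def] by (rule bounded_linear_vec_nth)

lemma prod_diff:
  fixes A :: "real^'n \<Rightarrow> real" and B :: "real \<Rightarrow> real"
  assumes "\<And>u. A differentiable (at u)" "\<And>y. B differentiable (at y)"
  shows "(\<lambda>x. A (proj x) * B (lst x)) differentiable (at x)"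
proof -
  have "(\<lambda>x. A (proj x)) differentiable (at x)"
    by (rule differentiable_compose[OF assms(1) bounded_linear_imp_differentiable[OF bl_proj]])
  moreover have "(\<lambda>x. B (lst x)) differentiable (at x)"
    by (rule differentiable_compose[OF assms(2) bounded_linear_imp_differentiable[OF bl_lst]])
  ultimately show ?thesis using differentiable_mult[of "\<lambda>x. A (proj x)" x UNIV "\<lambda>x. B (lst x)"] by auto
qed

lemma GG_differentiable: "GG s k differentiable (at y)"
  using GG_deriv[OF spos] by (metis real_differentiable_def differentiable_def has_field_derivative_imp_has_derivative)

lemma iter_F:
  assumes sm: "smooth_fun f"
  shows "iter_pd is F = (\<lambda>x. iter_pd (fl is) f (proj x) * GG s (cnt is) (lst x))"
proof (induction "is")
  case Nil
  show ?case by (simp add: F_def fl_def cnt_def GG0)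
next
  case (Cons i "is")
  let ?A = "iter_pd (fl is) f" and ?B = "GG s (cnt is)"
  have Ad: "?A differentiable (at u)" for u using sm by (simp add: smooth_fun_def)
  show ?case
  proof
    fix x
    have "iter_pd (i # is) F x = pd i (\<lambda>x. ?A (proj x) * ?B (lst x)) x"
      by (simp add: Cons.IH)
    also have "\<dots> = iter_pd (fl (i # is)) f (proj x) * GG s (cnt (i # is)) (lst x)"
    proof (cases "e i")
      case None
      have "((\<lambda>t. lst x + t) has_field_derivative 1) (at 0)"
        by (auto intro!: derivative_eq_intros)
      from DERIV_chain2[OF GG_deriv[OF spos] this]
      have "((\<lambda>t. ?B (lst x + t)) has_field_derivative GG s (Suc (cnt is)) (lst x)) (at 0)" by simp
      from DERIV_cmult[OF this, of "?A (proj x)"]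
      have "deriv (\<lambda>t. ?A (proj x) * ?B (lst x + t)) 0 = ?A (proj x) * GG s (Suc (cnt is)) (lst x)"
        by (rule DERIV_imp_deriv)
      moreover have "pd i (\<lambda>x. ?A (proj x) * ?B (lst x)) x = deriv (\<lambda>t. ?A (proj x) * ?B (lst x + t)) 0"
        using pd_split[where \<Phi>="\<lambda>u y. ?A u * ?B y", of i x] None by simp
      ultimately show ?thesis using None by (simp add: fl_def cnt_def)
    next
      case (Some k)
      from DERIV_cmult_right[OF dir_deriv[OF Ad, of "proj x" "axis k 1"], of "?B (lst x)"]
      have "deriv (\<lambda>t. ?A (proj x + t *\<^sub>R axis k 1) * ?B (lst x)) 0 = pd k ?A (proj x) * ?B (lst x)"
        unfolding pd_def by (rule DERIV_imp_deriv)
      moreover have "pd i (\<lambda>x. ?A (proj x) * ?B (lst x)) x = deriv (\<lambda>t. ?A (proj x + t *\<^sub>R axis k 1) * ?B (lst x)) 0"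
        using pd_split[where \<Phi>="\<lambda>u y. ?A u * ?B y", of i x] Some by simp
      ultimately show ?thesis using Some by (simp add: fl_def cnt_def)
    qed
    finally show "iter_pd (i # is) F x = iter_pd (fl (i # is)) f (proj x) * GG s (cnt (i # is)) (lst x)" .
  qed
qed

lemma smooth_F: "smooth_fun f \<Longrightarrow> smooth_fun F"
  unfolding smooth_fun_def
proof (intro allI)
  fix "is" x
  assume sm: "\<forall>is x. iter_pd is f differentiable (at x)"
  then have "smooth_fun f" by (simp add: smooth_fun_def)
  show "iter_pd is F differentiable (at x)"
    unfolding iter_F[OF \<open>smooth_fun f\<close>]
    by (rule prod_diff) (use sm GG_differentiable in auto)
qed

end

lemma pow_sum_le: "(a::real) \<ge> 0 \<Longrightarrow> b \<ge> 0 \<Longrightarrow> (a + b) ^ k \<le> 2 ^ k * (a ^ k + b ^ k)"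
proof -
  assume a: "a \<ge> 0" and b: "b \<ge> 0"
  have "(a + b) ^ k \<le> (2 * max a b) ^ k" using a b by (intro power_mono) auto
  also have "\<dots> = 2 ^ k * max a b ^ k" by (simp add: power_mult_distrib)
  also have "max a b ^ k \<le> a ^ k + b ^ k" using a b by (cases "a \<le> b") (auto simp: max_def)
  then have "2 ^ k * max a b ^ k \<le> 2 ^ k * (a ^ k + b ^ k)" by simp
  finally show ?thesis .
qed

context splitg
begin

lemma norm_split: "norm x \<le> norm (proj x) + \<bar>lst x\<bar>"
proof -
  have "(norm x)\<^sup>2 = (lst x)\<^sup>2 + (norm (proj x))\<^sup>2"
    unfolding power2_norm_eq_inner inner_vec_def
    by (subst sum_m') (simp add: proj_def lst_def power2_eq_square)
  also have "\<dots> \<le> (norm (proj x) + \<bar>lst x\<bar>)\<^sup>2"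
    by (simp add: power2_sum)
  finally show ?thesis by (rule power2_le_imp_le) simp
qed

lemma rapid_F:
  assumes sm: "smooth_fun f" and rd: "rapidly_decaying f"
  shows "rapidly_decaying F"
  unfolding rapidly_decaying_def
proof (intro allI)
  fix "is" and k :: nat
  let ?A = "iter_pd (fl is) f" and ?B = "GG s (cnt is)"
  have bA: "\<exists>C. \<forall>u. \<bar>norm u ^ j * ?A u\<bar> \<le> C" for j
    using rd unfolding rapidly_decaying_def bounded_iff by (auto simp: real_norm_def)
  obtain C1 where C1: "\<And>u. \<bar>?A u\<bar> \<le> C1" using bA[of 0] by auto
  obtain C2 where C2: "\<And>u. \<bar>norm u ^ k * ?A u\<bar> \<le> C2" using bA[of k] by auto
  obtain D1 where D1: "\<And>y. \<bar>y\<bar> ^ 0 * \<bar>?B y\<bar> \<le> D1" using GG_bound[OF spos] by blast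
  obtain D2 where D2: "\<And>y. \<bar>y\<bar> ^ k * \<bar>?B y\<bar> \<le> D2" using GG_bound[OF spos] by blast
  show "bounded (range (\<lambda>x. norm x ^ k * iter_pd is F x))"
    unfolding bounded_iff iter_F[OF sm]
  proof (intro exI ballI)
    fix z assume "z \<in> range (\<lambda>x. norm x ^ k * (?A (proj x) * ?B (lst x)))"
    then obtain x where z: "z = norm x ^ k * (?A (proj x) * ?B (lst x))" by auto
    let ?a = "norm (proj x)" and ?b = "\<bar>lst x\<bar>"
    have "norm z = norm x ^ k * (\<bar>?A (proj x)\<bar> * \<bar>?B (lst x)\<bar>)" by (simp add: z abs_mult)
    also have "\<dots> \<le> (2 ^ k * (?a ^ k + ?b ^ k)) * (\<bar>?A (proj x)\<bar> * \<bar>?B (lst x)\<bar>)"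
    proof (rule mult_right_mono)
      have "norm x ^ k \<le> (?a + ?b) ^ k" by (intro power_mono norm_split) auto
      also have "\<dots> \<le> 2 ^ k * (?a ^ k + ?b ^ k)" by (rule pow_sum_le) auto
      finally show "norm x ^ k \<le> 2 ^ k * (?a ^ k + ?b ^ k)" .
    qed simp
    also have "\<dots> = 2 ^ k * (\<bar>?a ^ k * ?A (proj x)\<bar> * \<bar>?B (lst x)\<bar> + \<bar>?A (proj x)\<bar> * (?b ^ k * \<bar>?B (lst x)\<bar>))"
      by (simp add: algebra_simps abs_mult)
    also have "\<dots> \<le> 2 ^ k * (C2 * D1 + C1 * D2)"
    proof -
      have "\<bar>?a ^ k * ?A (proj x)\<bar> * \<bar>?B (lst x)\<bar> \<le> C2 * D1"
        using C2[of "proj x"] D1[of "lst x"] by (intro mult_mono) auto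
      moreover have "\<bar>?A (proj x)\<bar> * (?b ^ k * \<bar>?B (lst x)\<bar>) \<le> C1 * D2"
        using C1[of "proj x"] D2[of "lst x"] by (intro mult_mono) auto
      ultimately show ?thesis by simp
    qed
    finally show "norm z \<le> 2 ^ k * (C2 * D1 + C1 * D2)" .
  qed
qed

end

lemma prod_Basis_vec: "(\<Prod>b\<in>(Basis :: (real^'a::finite) set). \<phi> b) = (\<Prod>i\<in>UNIV. \<phi> (axis i 1))"
proof -
  have "(Basis :: (real^'a) set) = range (\<lambda>i. axis i 1)" by (auto simp: Basis_vec_def)
  moreover have "inj (\<lambda>i::'a. axis i (1::real))" by (auto intro: injI simp: axis_eq_axis)
  ultimately show ?thesis using prod.reindex[of "\<lambda>i::'a. axis i (1::real)" UNIV \<phi>] by (simp add: o_def)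
qed

lemma prod_Basis_pair: "(\<Prod>b\<in>(Basis :: ('a::euclidean_space \<times> real) set). \<phi> b) = (\<Prod>b\<in>Basis. \<phi> (b, 0)) * \<phi> (0, 1)"
  unfolding Basis_prod_def
  by (subst prod.union_disjoint) (auto simp: prod.reindex inj_on_def)

context splitc
begin

lemma prod_m': "(\<Prod>i\<in>UNIV. \<psi> i) = \<psi> (r None) * (\<Prod>k\<in>UNIV. \<psi> (r (Some k)))"
proof -
  have "(\<Prod>i\<in>UNIV. \<psi> i) = (\<Prod>z\<in>UNIV. \<psi> (r z))"
  proof -
    have "bij r" unfolding r_def using bij by (simp add: bij_imp_bij_inv)
    then show ?thesis using prod.reindex_bij_betw[of r UNIV UNIV \<psi>] by (simp add: bij_def bij_betw_def)
  qed
  also have "\<dots> = \<psi> (r None) * (\<Prod>k\<in>UNIV. \<psi> (r (Some k)))"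
    by (subst UNIV_option_conv) (simp add: prod.reindex)
  finally show ?thesis .
qed

lemma all_m: "(\<forall>i. Q i) \<longleftrightarrow> Q (r None) \<and> (\<forall>k. Q (r (Some k)))"
  by (metis option.exhaust r_e)

definition T :: "real^'m \<Rightarrow> (real^'n) \<times> real" where "T x = (proj x, lst x)"

lemma T_meas[measurable]: "T \<in> borel_measurable borel"
proof -
  have "bounded_linear proj"
  proof -
    have "linear proj" by (rule linearI) (auto simp: proj_def vec_eq_iff)
    then show ?thesis by (simp add: linear_conv_bounded_linear)
  qed
  moreover have "bounded_linear lst" unfolding lst_def[abs_def] by (rule bounded_linear_vec_nth)
  ultimately have "continuous_on UNIV T"
    unfolding T_def by (intro continuous_on_Pair linear_continuous_on) auto
  then show ?thesis by (rule borel_measurable_continuous_onI)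
qed

lemma distr_T: "distr lborel borel T = lborel"
proof (rule lborel_eqI[symmetric])
  fix l u :: "(real^'n) \<times> real"
  assume le: "\<And>b. b \<in> Basis \<Longrightarrow> l \<bullet> b \<le> u \<bullet> b"
  obtain la lb where l: "l = (la, lb)" by (cases l)
  obtain ua ub where u: "u = (ua, ub)" by (cases u)
  have lea: "la $ k \<le> ua $ k" for k using le[of "(axis k 1, 0)"] by (auto simp: l u Basis_prod_def inner_axis)
  have leb: "lb \<le> ub" using le[of "(0, 1)"] by (auto simp: l u Basis_prod_def)
  define L :: "real^'m" where "L = (\<chi> i. case e i of Some k \<Rightarrow> la $ k | None \<Rightarrow> lb)"
  define U :: "real^'m" where "U = (\<chi> i. case e i of Some k \<Rightarrow> ua $ k | None \<Rightarrow> ub)"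
  have bx: "box (la, lb) (ua, ub) = box la ua \<times> box lb ub"
    by (auto simp add: Basis_prod_def ball_Un box_def)
  have pre: "T -` box l u = box L U"
  proof (rule set_eqI)
    fix x
    have "x \<in> box L U \<longleftrightarrow> (\<forall>i. L$i < x$i \<and> x$i < U$i)" by (simp add: mem_box_cart)
    also have "\<dots> \<longleftrightarrow> (L$(r None) < x$(r None) \<and> x$(r None) < U$(r None)) \<and>
       (\<forall>k. L$(r (Some k)) < x$(r (Some k)) \<and> x$(r (Some k)) < U$(r (Some k)))" by (rule all_m)
    finally show "x \<in> T -` box l u \<longleftrightarrow> x \<in> box L U"
      unfolding l u bx by (auto simp: T_def mem_box_cart L_def U_def proj_def lst_def)
  qed
  have LU: "L \<bullet> b \<le> U \<bullet> b" if hb: "b \<in> Basis" for b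
  proof -
    obtain i where b: "b = axis i 1" using hb axis_inverse by blast
    show ?thesis using lea leb by (cases "e i") (auto simp: b inner_axis L_def U_def)
  qed
  have "emeasure (distr lborel borel T) (box l u) = emeasure lborel (T -` box l u)"
    by (subst emeasure_distr) auto
  also have "\<dots> = (\<Prod>b\<in>Basis. (U - L) \<bullet> b)" unfolding pre by (rule emeasure_lborel_box[OF LU])
  also have "(\<Prod>b\<in>Basis. (U - L) \<bullet> b) = (\<Prod>b\<in>Basis. (u - l) \<bullet> b)"
    unfolding prod_Basis_vec prod_Basis_pair
    by (subst prod_m') (simp add: inner_axis L_def U_def l u mult.commute)
  finally show "emeasure (distr lborel borel T) (box l u) = (\<Prod>b\<in>Basis. (u - l) \<bullet> b)" .
qed simp

end

context splitc
begin

lemma int_sep: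
  fixes h :: "real^'n \<Rightarrow> real" and g :: "real \<Rightarrow> real"
  assumes ih: "integrable lborel h" and ig: "integrable lborel g"
  shows "integrable lborel (\<lambda>x. h (proj x) * g (lst x))"
    and "integral\<^sup>L lborel (\<lambda>x. h (proj x) * g (lst x)) = integral\<^sup>L lborel h * integral\<^sup>L lborel g"
proof -
  define H where "H p = h (fst p) * g (snd p)" for p :: "(real^'n) \<times> real"
  have [measurable]: "h \<in> borel_measurable borel" "g \<in> borel_measurable borel"
    using borel_measurable_integrable[OF ih] borel_measurable_integrable[OF ig] by auto
  have Hm: "H \<in> borel_measurable (lborel \<Otimes>\<^sub>M lborel)" unfolding H_def by measurable
  have "H \<in> borel_measurable (borel \<Otimes>\<^sub>M borel)" unfolding H_def by measurable
  then have HmB: "H \<in> borel_measurable borel" by (simp add: borel_prod)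
  have eq: "(\<lambda>x. h (proj x) * g (lst x)) = (\<lambda>x. H (T x))" by (simp add: H_def T_def)
  have Tl: "T \<in> lborel \<rightarrow>\<^sub>M borel" using T_meas by simp
  have iH: "integrable (lborel \<Otimes>\<^sub>M lborel) H"
  proof (rule lborel_pair.Fubini_integrable[OF Hm])
    have "integrable lborel (\<lambda>x. \<bar>h x\<bar> * (\<integral>y. \<bar>g y\<bar> \<partial>lborel))"
      using ih by (intro integrable_mult_left) auto
    then show "integrable lborel (\<lambda>x. \<integral>y. norm (H (x, y)) \<partial>lborel)"
      by (simp add: H_def abs_mult)
    show "AE x in lborel. integrable lborel (\<lambda>y. H (x, y))"
      using ig by (auto simp: H_def intro!: integrable_mult_right)
  qed
  have D: "distr lborel borel T = (lborel \<Otimes>\<^sub>M lborel :: ((real^'n) \<times> real) measure)"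
    by (simp add: distr_T lborel_prod)
  show "integrable lborel (\<lambda>x. h (proj x) * g (lst x))"
    unfolding eq using iH integrable_distr_eq[OF Tl HmB] D by simp
  have "integral\<^sup>L lborel (\<lambda>x. h (proj x) * g (lst x)) = integral\<^sup>L (distr lborel borel T) H"
    unfolding eq by (rule integral_distr[OF Tl HmB, symmetric])
  also have "\<dots> = (\<integral>x. (\<integral>y. H (x, y) \<partial>lborel) \<partial>lborel)"
    unfolding D by (rule lborel_pair.integral_fst'[OF iH, symmetric])
  also have "\<dots> = (\<integral>x. h x * integral\<^sup>L lborel g \<partial>lborel)" by (simp add: H_def)
  also have "\<dots> = integral\<^sup>L lborel h * integral\<^sup>L lborel g" by simp
  finally show "integral\<^sup>L lborel (\<lambda>x. h (proj x) * g (lst x)) = integral\<^sup>L lborel h * integral\<^sup>L lborel g" .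
qed

end

context splitg
begin

lemma F_int:
  assumes "integrable lborel h"
  shows "integrable lborel (\<lambda>x. h (proj x) * normal_density 0 s (lst x))"
    "integral\<^sup>L lborel (\<lambda>x. h (proj x) * normal_density 0 s (lst x)) = integral\<^sup>L lborel h"
  using int_sep[OF assms integrable_normal_density[OF spos, of 0]] integral_normal_density[OF spos, of 0] by auto

lemma F_adm:
  assumes ad: "admissible f"
  shows "admissible F" "I_fun F = 1 / s\<^sup>2 + I_fun f" "Q_fun F = (1 / s\<^sup>2)\<^sup>2 + Q_fun f"
    "D_fun F = 2 * (1 / s\<^sup>2) ^ 3 + D_fun f"
proof -
  let ?a = "1 / s\<^sup>2"
  let ?nd = "normal_density 0 s"
  have sm: "smooth_fun f" and rd: "rapidly_decaying f" and i0: "integrable lborel f"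
    and i1: "integral\<^sup>L lborel f = 1"
    and iI: "integrable lborel (\<lambda>x. tr_H f x * f x)"
    and iQ: "integrable lborel (\<lambda>x. tr_H2 f x * f x)"
    and iD: "integrable lborel (\<lambda>x. (gradH_sq f x + 2 * tr_H3 f x) * f x)"
    and Qp: "Q_fun f > 0"
    using ad by (auto simp: admissible_def)
  define h1 where "h1 u = ?a * f u + tr_H f u * f u" for u
  define h2 where "h2 u = ?a\<^sup>2 * f u + tr_H2 f u * f u" for u
  define h3 where "h3 u = 2 * ?a ^ 3 * f u + (gradH_sq f u + 2 * tr_H3 f u) * f u" for u
  have ih1: "integrable lborel h1" unfolding h1_def using i0 iI by auto
  have ih2: "integrable lborel h2" unfolding h2_def using i0 iQ by auto
  have ih3: "integrable lborel h3" unfolding h3_def using i0 iD by auto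
  have I1: "integral\<^sup>L lborel h1 = ?a + I_fun f" unfolding h1_def I_fun_def using i0 iI i1 by simp
  have I2: "integral\<^sup>L lborel h2 = ?a\<^sup>2 + Q_fun f" unfolding h2_def Q_fun_def using i0 iQ i1 by simp
  have I3: "integral\<^sup>L lborel h3 = 2 * ?a ^ 3 + D_fun f" unfolding h3_def D_fun_def using i0 iD i1 by simp
  have e0: "F = (\<lambda>x. f (proj x) * ?nd (lst x))" by (simp add: F_def[abs_def])
  have e1: "(\<lambda>x. tr_H F x * F x) = (\<lambda>x. h1 (proj x) * ?nd (lst x))"
    by (simp add: trH_F F_def h1_def algebra_simps)
  have e2: "(\<lambda>x. tr_H2 F x * F x) = (\<lambda>x. h2 (proj x) * ?nd (lst x))"
    by (simp add: trH2_F F_def h2_def algebra_simps)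
  have e3: "(\<lambda>x. (gradH_sq F x + 2 * tr_H3 F x) * F x) = (\<lambda>x. h3 (proj x) * ?nd (lst x))"
    by (simp add: trH3_F gradH_F F_def h3_def algebra_simps)
  show QF: "Q_fun F = ?a\<^sup>2 + Q_fun f" unfolding Q_fun_def e2 F_int(2)[OF ih2] I2 by (simp add: Q_fun_def)
  show "I_fun F = ?a + I_fun f" unfolding I_fun_def e1 F_int(2)[OF ih1] I1 by (simp add: I_fun_def)
  show "D_fun F = 2 * ?a ^ 3 + D_fun f" unfolding D_fun_def e3 F_int(2)[OF ih3] I3 by (simp add: D_fun_def)
  show "admissible F"
    unfolding admissible_def
  proof (intro conjI allI)
    show "smooth_fun F" by (rule smooth_F[OF sm])
    show "0 < F x" for x using fpos spos by (simp add: F_def normal_density_pos)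
    show "rapidly_decaying F" by (rule rapid_F[OF sm rd])
    show "integrable lborel F" unfolding e0 by (rule F_int(1)[OF i0])
    show "integral\<^sup>L lborel F = 1" unfolding e0 F_int(2)[OF i0] by (rule i1)
    show "integrable lborel (\<lambda>x. tr_H F x * F x)" unfolding e1 by (rule F_int(1)[OF ih1])
    show "integrable lborel (\<lambda>x. tr_H2 F x * F x)" unfolding e2 by (rule F_int(1)[OF ih2])
    show "integrable lborel (\<lambda>x. (gradH_sq F x + 2 * tr_H3 F x) * F x)" unfolding e3 by (rule F_int(1)[OF ih3])
    have "(1 / s\<^sup>2)\<^sup>2 \<ge> 0" by simp
    then show "0 < Q_fun F" unfolding QF using Qp by linarith
  qed
qed

end

lemma theta_le_ratio:
  fixes e :: "'m::finite \<Rightarrow> 'n::finite option" and f :: "real^'n \<Rightarrow> real"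
  assumes bij: "bij e" and ad: "admissible f"
  shows "theta_star TYPE('m) \<le> ereal (I_fun f * D_fun f / (Q_fun f)\<^sup>2)"
proof -
  have fpos: "\<And>x. f x > 0" and Qp: "Q_fun f > 0" using ad by (auto simp: admissible_def)
  define a where "a n = inverse (real (Suc n))" for n
  define x where "x n = (a n + I_fun f) * (2 * a n ^ 3 + D_fun f) / ((a n)\<^sup>2 + Q_fun f)\<^sup>2" for n
  have le: "theta_star TYPE('m) \<le> ereal (x n)" for n
  proof -
    define s where "s = sqrt (real (Suc n))"
    have sp: "s > 0" by (simp add: s_def)
    interpret G: splitg e f s by unfold_locales (use bij fpos sp in auto)
    have as: "1 / s\<^sup>2 = a n" by (simp add: s_def a_def divide_inverse)
    have "theta_star TYPE('m) \<le> ereal (I_fun G.F * D_fun G.F / (Q_fun G.F)\<^sup>2)"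
      unfolding theta_star_def using G.F_adm(1)[OF ad] by (intro INF_lower) auto
    also have "I_fun G.F * D_fun G.F / (Q_fun G.F)\<^sup>2 = x n"
      unfolding G.F_adm(2-4)[OF ad] as x_def by simp
    finally show ?thesis .
  qed
  have a0: "a \<longlonglongrightarrow> 0" unfolding a_def by (rule LIMSEQ_inverse_real_of_nat)
  have "x \<longlonglongrightarrow> (0 + I_fun f) * (2 * 0 ^ 3 + D_fun f) / (0\<^sup>2 + Q_fun f)\<^sup>2"
    unfolding x_def using Qp by (intro tendsto_intros a0) auto
  then have "(\<lambda>n. ereal (x n)) \<longlonglongrightarrow> ereal (I_fun f * D_fun f / (Q_fun f)\<^sup>2)"
    by (simp add: tendsto_ereal)
  then show ?thesis by (rule LIMSEQ_le_const) (use le in auto)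
qed

theorem proposition7p2:
  assumes "CARD('m::finite) = CARD('n::finite) + 1"
  shows "theta_star TYPE('m) \<le> theta_star TYPE('n)"
proof -
  have "card (UNIV :: 'n option set) = CARD('n) + 1"
    by (simp add: UNIV_option_conv card_image)
  then obtain e :: "'m \<Rightarrow> 'n option" where "bij_betw e UNIV UNIV"
    using finite_same_card_bij[of "UNIV :: 'm set" "UNIV :: 'n option set"] assms by auto
  then have bij: "bij e" by (simp add: bij_def bij_betw_def)
  show ?thesis
    unfolding theta_star_def[of "TYPE('n)"]
    by (intro INF_greatest theta_le_ratio[OF bij]) auto
qed

end
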